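(* Let $\tau(s,t)$, $\mathcal F:=\log\tau$, satisfy, as an identity of formal series in $z_1^{-1},z_2^{-1}$, $$z_1\exp\Bigl(-\sum_{n\ge1}\frac1n\frac{\partial^2\mathcal F}{\partial s\partial t_n}z_1^{-n}\Bigr)-z_2\exp\Bigl(-\sum_{n\ge1}\frac1n\frac{\partial^2\mathcal F}{\partial s\partial t_n}z_2^{-n}\Bigr)=(z_1-z_2)\exp\Bigl(\sum_{m,n\ge1}\frac1{mn}\frac{\partial^2\mathcal F}{\partial t_m\partial t_n}z_1^{-m}z_2^{-n}\Bigr).$$ Let $\mathcal L(k;s,t)$ be the formal inverse series of $\mathsf k(z;s,t):=z\exp\bigl(-\sum_{n\ge1}\frac1n\frac{\partial^2\mathcal F}{\partial t_n\partial s}z^{-n}\bigr)$, and let $\mathcal P(k;s,t):=k\exp\bigl(-\frac{\partial^2\mathcal F}{\partial s^2}\bigr)$. Then $(\mathcal L,\mathcal P)$ satisfies the dcmKP hierarchy with $N=1$ (with $x$ identified with $t_1$).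
   Context: Variables: $s$ (continuous), $t=(t_1,t_2,\dots)$, with $x$ identified with $t_1$. Poisson bracket $\{f,g\}=\frac{\partial f}{\partial k}\frac{\partial g}{\partial x}-\frac{\partial f}{\partial x}\frac{\partial g}{\partial k}$. The dcmKP hierarchy with $N=1$: $\mathcal L=k+\sum_{n\ge1}u_n(s,t)k^{1-n}$, $\mathcal P=p_0(s,t)k$ with $p_0\ne0$, $\log\mathcal P:=\log p_0+\log k$, satisfying for $n\ge1$: $\partial_{t_n}\mathcal L=\{\mathcal B_n,\mathcal L\}$ with $\mathcal B_n:=(\mathcal L^n)_{>0}$ (projection onto positive powers of $k$), $\partial_s\mathcal L=\{\log\mathcal P,\mathcal L\}$, $\partial_{t_n}\log\mathcal P=\partial_s\mathcal B_n-\{\log\mathcal P,\mathcal B_n\}$. *)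

theory Defs
  imports "HOL-Computational_Algebra.Formal_Power_Series"
          "HOL-Computational_Algebra.Formal_Laurent_Series"
begin

unbundle fps_syntax

text \<open>Coefficient ring: an abstract commutative real algebra (e.g. a ring of functions
  of s and t = (t_1, t_2, ...)), on which partial derivatives act as commuting derivations.\<close>

definition derivation :: "('a::{comm_ring_1,real_algebra_1} \<Rightarrow> 'a) \<Rightarrow> bool" where
  "derivation D \<longleftrightarrow> (\<forall>a b. D (a + b) = D a + D b) \<and> (\<forall>a b. D (a * b) = a * D b + D a * b)
      \<and> (\<forall>c a. D (c *\<^sub>R a) = c *\<^sub>R D a)"

definition ser_exp :: "'a::{comm_ring_1,real_algebra_1} fps \<Rightarrow> 'a fps" where
  "ser_exp G = Abs_fps (\<lambda>n. \<Sum>k\<le>n. (1 / fact k) *\<^sub>R (fps_nth (G ^ k) n))"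

definition ser_exp2 :: "'a::{comm_ring_1,real_algebra_1} fps fps \<Rightarrow> 'a fps fps" where
  "ser_exp2 G = Abs_fps (\<lambda>m. Abs_fps (\<lambda>n. \<Sum>k\<le>m+n. (1 / fact k) *\<^sub>R (fps_nth (fps_nth (G ^ k) m) n)))"

text \<open>Laurent series in k with finitely many positive powers of k are represented as
  'a fls in the variable X = k^{-1}: coefficient of k^m is  f $$ (-m).\<close>

definition cmap :: "('a::zero \<Rightarrow> 'a) \<Rightarrow> 'a fls \<Rightarrow> 'a fls" where
  "cmap D f = Abs_fls (\<lambda>n. if n < fls_subdegree f then 0 else D (f $$ n))"

text \<open>Derivative with respect to k.\<close>
definition dk :: "'a::comm_ring_1 fls \<Rightarrow> 'a fls" where
  "dk f = Abs_fls (\<lambda>j. of_int (1 - j) * f $$ (j - 1))"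

text \<open>Poisson bracket {f,g} = f_k g_x - f_x g_k, with x = t_1.\<close>
definition pbr :: "('a::comm_ring_1 \<Rightarrow> 'a) \<Rightarrow> 'a fls \<Rightarrow> 'a fls \<Rightarrow> 'a fls" where
  "pbr Dx f g = dk f * cmap Dx g - cmap Dx f * dk g"

text \<open>Bracket {log P, g} where log P = lp0 + log k (lp0 = log p0):
  d/dk log P = k^{-1}, d/dx log P = Dx lp0.\<close>
definition pbr_logP :: "('a::comm_ring_1 \<Rightarrow> 'a) \<Rightarrow> 'a \<Rightarrow> 'a fls \<Rightarrow> 'a fls" where
  "pbr_logP Dx lp0 g = fls_X * cmap Dx g - fls_const (Dx lp0) * dk g"

text \<open>Projection onto positive powers of k.\<close>
definition proj_pos :: "'a::zero fls \<Rightarrow> 'a fls" where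
  "proj_pos f = Abs_fls (\<lambda>j. if j < 0 then f $$ j else 0)"

text \<open>dcmKP hierarchy with N = 1, for L = k + sum u_n k^{1-n} and log P = lp0 + log k.\<close>
definition dcmKP1 :: "('a::{comm_ring_1,real_algebra_1} \<Rightarrow> 'a) \<Rightarrow> (nat \<Rightarrow> 'a \<Rightarrow> 'a)
     \<Rightarrow> 'a fls \<Rightarrow> 'a \<Rightarrow> bool" where
  "dcmKP1 Ds Dt L lp0 \<longleftrightarrow>
     L $$ (-1) = 1 \<and> (\<forall>j < -1. L $$ j = 0) \<and>
     (\<forall>n\<ge>1. cmap (Dt n) L = pbr (Dt 1) (proj_pos (L ^ n)) L) \<and>
     cmap Ds L = pbr_logP (Dt 1) lp0 L \<and>
     (\<forall>n\<ge>1. fls_const (Dt n lp0) =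
         cmap Ds (proj_pos (L ^ n)) - pbr_logP (Dt 1) lp0 (proj_pos (L ^ n)))"

text \<open>L (in X = k^{-1}) is the formal inverse series of k(z) = z * E(z^{-1}), E an fps
  with constant term 1: writing L = X^{-1} U with U$0 = 1, k(L(k)) = k, i.e.
  L * E(1/L) = X^{-1}, where 1/L = X * V with U * V = 1.\<close>
definition formal_inverse_of :: "'a::comm_ring_1 fps \<Rightarrow> 'a fls \<Rightarrow> bool" where
  "formal_inverse_of E L \<longleftrightarrow>
     L $$ (-1) = 1 \<and> (\<forall>j < -1. L $$ j = 0) \<and>
     (\<exists>V. fls_regpart (fls_shift (-1) L) * V = 1 \<and>
          L * fps_to_fls (fps_compose E (fps_X * V)) = fls_X_inv)"

definition kser :: "('a::{comm_ring_1,real_algebra_1} \<Rightarrow> 'a) \<Rightarrow> (nat \<Rightarrow> 'a \<Rightarrow> 'a) \<Rightarrow> 'a \<Rightarrow> 'a fps" where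
  "kser Ds Dt F = ser_exp (Abs_fps (\<lambda>n. if n = 0 then 0 else - ((1 / real n) *\<^sub>R Ds (Dt n F))))"

definition Gser :: "(nat \<Rightarrow> 'a \<Rightarrow> 'a) \<Rightarrow> 'a \<Rightarrow> 'a::{comm_ring_1,real_algebra_1} fps fps" where
  "Gser Dt F = Abs_fps (\<lambda>m. Abs_fps (\<lambda>n. if m = 0 \<or> n = 0 then 0
                      else (1 / (real m * real n)) *\<^sub>R Dt m (Dt n F)))"

text \<open>Two-variable Laurent series: outer variable z1^{-1}, inner variable z2^{-1}.\<close>
definition lift1 :: "'a::comm_ring_1 fps \<Rightarrow> 'a fls fls" where
  "lift1 E = fps_to_fls (Abs_fps (\<lambda>n. fls_const (fps_nth E n)))"

definition lift2 :: "'a::comm_ring_1 fps fps \<Rightarrow> 'a fls fls" where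
  "lift2 G = fps_to_fls (Abs_fps (\<lambda>m. fps_to_fls (fps_nth G m)))"

definition bilinear_identity :: "('a::{comm_ring_1,real_algebra_1} \<Rightarrow> 'a) \<Rightarrow> (nat \<Rightarrow> 'a \<Rightarrow> 'a) \<Rightarrow> 'a \<Rightarrow> bool" where
  "bilinear_identity Ds Dt F \<longleftrightarrow>
     fls_X_inv * lift1 (kser Ds Dt F) - fls_const (fls_X_inv * fps_to_fls (kser Ds Dt F))
       = (fls_X_inv - fls_const fls_X_inv) * lift2 (ser_exp2 (Gser Dt F))"

end

theory Submission
  imports Defs
begin


section \<open>Composition over commutative rings\<close>

lemma product_composition_lemma':
  assumes c0: "c$0 = (0::'a::comm_ring_1)"
    and d0: "d$0 = 0"
  shows "((a oo c) * (b oo d))$n =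
    sum (\<lambda>(k,m). a$k * b$m * (c^k * d^m) $ n) {(k,m). k + m \<le> n}"  (is "?l = ?r")
proof -
  let ?S = "{(k::nat, m::nat). k + m \<le> n}"
  have s: "?S \<subseteq> {0..n} \<times> {0..n}" by (simp add: subset_eq)
  have f: "finite {(k::nat, m::nat). k + m \<le> n}"
    by (auto intro: finite_subset[OF s])
  have "?r = (\<Sum>(k, m) \<in> {(k, m). k + m \<le> n}. \<Sum>j = 0..n. a $ k * b $ m * (c ^ k $ j * d ^ m $ (n - j)))"
    by (simp add: fps_mult_nth sum_distrib_left)
  also have "\<dots> = (\<Sum>i = 0..n. \<Sum>(k,m)\<in>{(k,m). k+m \<le> n}. a $ k * c ^ k $ i * b $ m * d ^ m $ (n-i))"
    unfolding sum.swap [where A = "{0..n}"] by (auto simp add: field_simps intro: sum.cong)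
  also have "... = (\<Sum>i = 0..n.
                    \<Sum>q = 0..i. \<Sum>j = 0..n - i. a $ q * c ^ q $ i * (b $ j * d ^ j $ (n - i)))"
    apply (rule sum.cong [OF refl])
    apply (simp add: sum.cartesian_product mult.assoc)
    apply (rule sum.mono_neutral_right[OF f], force)
    by clarsimp (metis c0 d0 leI startsby_zero_power_prefix mult_zero_left mult_zero_right)
  also have "\<dots> = ?l"
    by (simp add: fps_mult_nth fps_compose_nth sum_product)
  finally show ?thesis by simp
qed

lemma fcomp_mult:
  assumes c0: "c $ 0 = (0::'a::comm_ring_1)"
  shows "(a * b) oo c = (a oo c) * (b oo c)"
proof -
  have "((a oo c) * (b oo c))$n = sum (\<lambda>s. sum (\<lambda>i. a$i * b$(s - i) * (c^s) $ n) {0..s}) {0..n}" for n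
  unfolding product_composition_lemma'[OF c0 c0] power_add[symmetric]
  unfolding sum_pair_less_iff[where a = "\<lambda>k. a$k" and b="\<lambda>m. b$m" and c="\<lambda>s. (c ^ s)$n" and n = n] ..
  then show ?thesis
    by (auto simp: fps_eq_iff fps_compose_nth fps_mult_nth sum_distrib_right)
qed

lemma fcomp_power:
  assumes c0: "c $ 0 = (0::'a::comm_ring_1)"
  shows "(a ^ n) oo c = (a oo c) ^ n"
  by (induct n) (simp_all add: fcomp_mult[OF c0])

lemma fcomp_const [simp]: "fps_const (a::'a::comm_ring_1) oo c = fps_const a"
  by (simp add: fps_eq_iff fps_compose_nth power_0_left sum.atLeast_Suc_atMost)

lemma fcomp_X_power:
  assumes c0: "c $ 0 = (0::'a::comm_ring_1)"
  shows "(fps_X ^ n) oo c = c ^ n"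
  using fcomp_power[OF c0, of fps_X n] c0 by simp

definition trunc :: "nat \<Rightarrow> 'a::comm_ring_1 fps \<Rightarrow> 'a fps \<Rightarrow> 'a fps" where
  "trunc N A c = (\<Sum>i\<le>N. fps_const (A$i) * c^i)"

lemma trunc_nth: "trunc N A c $ n = (\<Sum>i\<le>N. A$i * (c^i) $ n)"
  by (simp add: trunc_def fps_sum_nth)

lemma compose_trunc:
  assumes c0: "c $ 0 = (0::'a::comm_ring_1)" and "n \<le> N"
  shows "(A oo c) $ n = trunc N A c $ n"
proof -
  have "(A oo c) $ n = (\<Sum>i\<in>{0..n}. A$i * (c^i) $ n)" by (simp add: fps_compose_nth)
  also have "\<dots> = (\<Sum>i\<le>N. A$i * (c^i) $ n)"
    apply (rule sum.mono_neutral_left)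
    using assms startsby_zero_power_prefix[OF c0] by auto
  finally show ?thesis by (simp add: trunc_nth)
qed

lemma mult_nth_cong_right:
  assumes "\<And>i. i \<le> n \<Longrightarrow> a $ i = b $ i"
  shows "(x * a) $ n = (x * (b :: 'a::comm_ring_1 fps)) $ n"
  using assms by (simp add: fps_mult_nth)

lemma trunc_shift_sum:
  fixes A :: "'a::comm_ring_1 fps"
  shows "(\<Sum>i\<le>Suc M. fps_const (A$i) * (of_nat i * c^(i-1) * d)) = trunc M (fps_deriv A) c * d"
proof -
  have "(\<Sum>i\<le>Suc M. fps_const (A$i) * (of_nat i * c^(i-1) * d))
      = (\<Sum>j\<le>M. fps_const (A$Suc j) * (of_nat (Suc j) * c^j * d))"
    by (subst sum.atMost_Suc_shift) simp
  also have "\<dots> = (\<Sum>j\<le>M. fps_const (fps_deriv A $ j) * c^j) * d"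
  proof (simp only: sum_distrib_right, rule sum.cong[OF refl])
    fix j
    have 1: "fps_const (fps_deriv A $ j) = fps_const (of_nat (Suc j)) * fps_const (A $ Suc j)"
      by (simp del: of_nat_Suc)
    show "fps_const (A $ Suc j) * (of_nat (Suc j) * c ^ j * d) = fps_const (fps_deriv A $ j) * c ^ j * d"
      unfolding 1 fps_of_nat by (simp only: ac_simps)
  qed
  finally show ?thesis by (simp add: trunc_def)
qed

lemma fcomp_deriv:
  assumes c0: "c $ 0 = (0::'a::comm_ring_1)"
  shows "fps_deriv (A oo c) = (fps_deriv A oo c) * fps_deriv c"
proof (rule fps_ext)
  fix n
  have "fps_deriv (A oo c) $ n = of_nat (Suc n) * (A oo c) $ Suc n" by simp
  also have "\<dots> = of_nat (Suc n) * trunc (Suc n) A c $ Suc n" using compose_trunc[OF c0, of "Suc n" "Suc n"] by simp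
  also have "\<dots> = fps_deriv (trunc (Suc n) A c) $ n" by simp
  also have "fps_deriv (trunc (Suc n) A c) = (\<Sum>i\<le>Suc n. fps_const (A$i) * (of_nat i * c^(i-1) * fps_deriv c))"
    unfolding trunc_def fps_deriv_sum
    by (rule sum.cong[OF refl]) (simp add: fps_deriv_power' mult_ac)
  also have "\<dots> = trunc n (fps_deriv A) c * fps_deriv c" by (rule trunc_shift_sum)
  also have "\<dots> $ n = ((fps_deriv A oo c) * fps_deriv c) $ n"
    by (subst mult.commute, subst (2) mult.commute, rule mult_nth_cong_right)
       (simp add: compose_trunc[OF c0])
  finally show "fps_deriv (A oo c) $ n = ((fps_deriv A oo c) * fps_deriv c) $ n" .
qed

section \<open>Derivations\<close>

context
  fixes D :: "'a::{comm_ring_1,real_algebra_1} \<Rightarrow> 'a"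
  assumes der: "derivation D"
begin

lemma D_add: "D (a + b) = D a + D b" using der by (simp add: derivation_def)
lemma D_mult: "D (a * b) = a * D b + D a * b" using der by (simp add: derivation_def)
lemma D_scaleR: "D (c *\<^sub>R a) = c *\<^sub>R D a" using der by (simp add: derivation_def)
lemma D_0 [simp]: "D 0 = 0" using D_add[of 0 0] by simp
lemma D_uminus: "D (- a) = - D a" using D_add[of a "-a"] by (simp add: eq_neg_iff_add_eq_0 add.commute)
lemma D_diff: "D (a - b) = D a - D b" using D_add[of a "-b"] by (simp add: D_uminus)
lemma D_sum: "D (sum f S) = sum (\<lambda>i. D (f i)) S"
  by (induct S rule: infinite_finite_induct) (simp_all add: D_add)
lemma D_1 [simp]: "D 1 = 0" using D_mult[of 1 1] by simp
lemma D_of_real_mult: "D (of_real r * a) = of_real r * D a"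
  using D_scaleR by (simp add: scaleR_conv_of_real)
lemma D_of_nat_mult: "D (of_nat k * a) = of_nat k * D a"
  using D_of_real_mult[of "real k" a] by simp
lemma D_power: "D (a ^ n) = of_nat n * a ^ (n - 1) * D a"
proof (induct n)
  case (Suc n) then show ?case by (cases n) (simp_all add: D_mult algebra_simps)
qed simp

definition dmap :: "'a fps \<Rightarrow> 'a fps" where "dmap A = Abs_fps (\<lambda>n. D (A $ n))"

lemma dmap_nth [simp]: "dmap A $ n = D (A $ n)" by (simp add: dmap_def)
lemma dmap_add: "dmap (A + B) = dmap A + dmap B" by (simp add: fps_eq_iff D_add)
lemma dmap_diff: "dmap (A - B) = dmap A - dmap B" by (simp add: fps_eq_iff D_diff)
lemma dmap_uminus: "dmap (- A) = - dmap A" by (simp add: fps_eq_iff D_uminus)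
lemma dmap_sum: "dmap (sum f S) = sum (\<lambda>i. dmap (f i)) S"
  by (induct S rule: infinite_finite_induct) (simp_all add: dmap_add fps_eq_iff)
lemma dmap_mult: "dmap (A * B) = A * dmap B + dmap A * B"
  by (simp add: fps_eq_iff fps_mult_nth D_sum D_mult sum.distrib)
lemma dmap_const [simp]: "dmap (fps_const a) = fps_const (D a)"
  by (simp add: fps_eq_iff)
lemma dmap_X [simp]: "dmap fps_X = 0" by (simp add: fps_eq_iff fps_X_nth)
lemma dmap_one [simp]: "dmap 1 = 0" by (simp add: fps_eq_iff)
lemma dmap_zero [simp]: "dmap 0 = 0" by (simp add: fps_eq_iff)
lemma dmap_power: "dmap (A ^ n) = of_nat n * A ^ (n - 1) * dmap A"
proof (induct n)
  case (Suc n) then show ?case by (cases n) (simp_all add: dmap_mult algebra_simps)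
qed simp

lemma dmap_compose:
  assumes c0: "c $ 0 = 0"
  shows "dmap (A oo c) = (dmap A oo c) + (fps_deriv A oo c) * dmap c"
proof (rule fps_ext)
  fix n
  have "dmap (A oo c) $ n = D (trunc (Suc n) A c $ n)" using compose_trunc[OF c0, of n "Suc n"] by simp
  also have "\<dots> = dmap (trunc (Suc n) A c) $ n" by simp
  also have "dmap (trunc (Suc n) A c) = trunc (Suc n) (dmap A) c +
      (\<Sum>i\<le>Suc n. fps_const (A$i) * (of_nat i * c^(i-1) * dmap c))"
    unfolding trunc_def dmap_sum sum.distrib[symmetric]
    by (rule sum.cong[OF refl]) (simp add: dmap_mult dmap_power mult_ac)
  also have "\<dots> = trunc (Suc n) (dmap A) c + trunc n (fps_deriv A) c * dmap c"
    by (simp only: trunc_shift_sum)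
  also have "\<dots> $ n = ((dmap A oo c) + (fps_deriv A oo c) * dmap c) $ n"
  proof -
    have e1: "(dmap A oo c) $ n = trunc (Suc n) (dmap A) c $ n" by (rule compose_trunc[OF c0]) simp
    have e2: "(trunc n (fps_deriv A) c * dmap c) $ n = ((fps_deriv A oo c) * dmap c) $ n"
      by (subst mult.commute, subst (2) mult.commute, rule mult_nth_cong_right)
         (simp add: compose_trunc[OF c0])
    show ?thesis by (simp only: fps_add_nth e1 e2)
  qed
  finally show "dmap (A oo c) $ n = ((dmap A oo c) + (fps_deriv A oo c) * dmap c) $ n" .
qed

end


section \<open>Coefficient derivations on Laurent series\<close>

context
  fixes D :: "'a::{comm_ring_1,real_algebra_1} \<Rightarrow> 'a"
  assumes der: "derivation D"
begin

lemma cmap_nth [simp]: "cmap D f $$ n = D (f $$ n)"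
proof -
  have "Abs_fls (\<lambda>n. if n < fls_subdegree f then 0 else D (f $$ n)) $$ n
      = (if n < fls_subdegree f then 0 else D (f $$ n))"
    by (rule nth_Abs_fls_lower_bound[of "fls_subdegree f"]) simp
  then show ?thesis using D_0[OF der] by (simp add: cmap_def)
qed

lemma cmap_fps_to_fls: "cmap D (fps_to_fls A) = fps_to_fls (dmap D A)"
  by (simp add: fls_eq_iff D_0[OF der] dmap_nth[OF der])

lemma cmap_shift: "cmap D (fls_shift k f) = fls_shift k (cmap D f)"
  by (simp add: fls_eq_iff)

lemma cmap_add: "cmap D (f + g) = cmap D f + cmap D g"
  by (simp add: fls_eq_iff D_add[OF der])
lemma cmap_diff: "cmap D (f - g) = cmap D f - cmap D g"
  by (simp add: fls_eq_iff D_diff[OF der])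
lemma cmap_uminus: "cmap D (- f) = - cmap D f"
  by (simp add: fls_eq_iff D_uminus[OF der])
lemma cmap_const [simp]: "cmap D (fls_const a) = fls_const (D a)"
  by (simp add: fls_eq_iff D_0[OF der])
lemma cmap_one [simp]: "cmap D 1 = 0"
  by (simp add: fls_eq_iff D_0[OF der] D_1[OF der])
lemma cmap_zero [simp]: "cmap D 0 = 0"
  by (simp add: fls_eq_iff D_0[OF der])
lemma cmap_X_inv [simp]: "cmap D fls_X_inv = 0"
  by (simp add: fls_eq_iff D_0[OF der] D_1[OF der])
lemma cmap_X [simp]: "cmap D fls_X = 0"
  by (simp add: fls_eq_iff D_0[OF der] D_1[OF der])

lemma cmap_mult: "cmap D (f * g) = f * cmap D g + cmap D f * g"
proof -
  define a where "a = - fls_subdegree f"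
  define b where "b = - fls_subdegree g"
  define F where "F = fls_base_factor_to_fps f"
  define G where "G = fls_base_factor_to_fps g"
  have f: "f = fls_shift a (fps_to_fls F)" unfolding a_def F_def
    using fls_conv_base_factor_to_fps_shift_subdegree by blast
  have g: "g = fls_shift b (fps_to_fls G)" unfolding b_def G_def
    using fls_conv_base_factor_to_fps_shift_subdegree by blast
  have "cmap D (f * g) = fls_shift (a + b) (fps_to_fls (dmap D (F * G)))"
    by (simp add: f g fls_times_both_shifted_simp cmap_shift cmap_fps_to_fls flip: fls_times_fps_to_fls)
  also have "\<dots> = f * cmap D g + cmap D f * g"
    by (simp add: f g dmap_mult[OF der] fls_times_both_shifted_simp cmap_shift fls_times_fps_to_fls
        cmap_fps_to_fls add.commute)
  finally show ?thesis .
qed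

lemma cmap_power: "cmap D (f ^ n) = of_nat n * f ^ (n - 1) * cmap D f"
proof (induct n)
  case (Suc n) then show ?case by (cases n) (simp_all add: cmap_mult algebra_simps)
qed simp

lemma cmap_const_mult: "cmap D (fls_const a * f) = fls_const a * cmap D f + fls_const (D a) * f"
  by (simp add: cmap_mult)

end

lemma dk_eq: "dk f = - (fls_X ^ 2 * fls_deriv (f :: 'a::comm_ring_1 fls))"
proof -
  obtain N where N: "\<forall>n<N. f $$ n = 0" by (elim fls_nth_vanishes_belowE)
  have "dk f $$ n = of_int (1 - n) * f $$ (n - 1)" for n
    unfolding dk_def
    by (rule nth_Abs_fls_lower_bound[of "N + 1"]) (use N in auto)
  then show ?thesis
    by (simp add: fls_eq_iff fls_X_power_times_conv_shift algebra_simps)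
qed

lemma dk_mult: "dk (f * g) = f * dk g + dk f * (g :: 'a::comm_ring_1 fls)"
  by (simp add: dk_eq algebra_simps)
lemma dk_add: "dk (f + g) = dk f + dk (g :: 'a::comm_ring_1 fls)"
  by (simp add: dk_eq algebra_simps)
lemma dk_diff: "dk (f - g) = dk f - dk (g :: 'a::comm_ring_1 fls)"
  by (simp add: dk_eq algebra_simps)
lemma dk_const [simp]: "dk (fls_const a :: 'a::comm_ring_1 fls) = 0"
  by (simp add: dk_eq)
lemma dk_X_inv [simp]: "dk (fls_X_inv :: 'a::comm_ring_1 fls) = 1"
proof -
  have "(fls_X ^ 2 * fls_X_inv\<^sup>2 :: 'a fls) = 1"
    by (simp add: fls_X_power_times_conv_shift fls_X_inv_power_conv_shift_1 flip: power_mult_distrib)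
  then show ?thesis by (simp add: dk_eq)
qed
lemma dk_power: "dk (f ^ n) = of_nat n * f ^ (n - 1) * dk (f :: 'a::comm_ring_1 fls)"
  by (simp add: dk_eq fls_deriv_power algebra_simps)

section \<open>Exponential\<close>

definition gexp :: "(nat \<Rightarrow> 'r::comm_ring_1) \<Rightarrow> 'r fps \<Rightarrow> 'r fps" where
  "gexp c A = Abs_fps (\<lambda>n. \<Sum>k\<le>n. c k * (A ^ k) $ n)"

definition gtr :: "(nat \<Rightarrow> 'r::comm_ring_1) \<Rightarrow> nat \<Rightarrow> 'r fps \<Rightarrow> 'r fps" where
  "gtr c N A = (\<Sum>k\<le>N. fps_const (c k) * A ^ k)"

lemma gexp_trunc:
  assumes A0: "A $ 0 = 0" and "n \<le> N"
  shows "gexp c A $ n = gtr c N A $ n"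
proof -
  have "gexp c A $ n = (\<Sum>k\<le>n. c k * (A ^ k) $ n)" by (simp add: gexp_def)
  also have "\<dots> = (\<Sum>k\<le>N. c k * (A ^ k) $ n)"
    apply (rule sum.mono_neutral_left)
    using assms startsby_zero_power_prefix[OF A0] by auto
  finally show ?thesis by (simp add: gtr_def fps_sum_nth)
qed

lemma gtr_shift:
  fixes c :: "nat \<Rightarrow> 'r::comm_ring_1"
  assumes cc: "\<And>k. of_nat (Suc k) * c (Suc k) = c k"
  shows "(\<Sum>k\<le>Suc M. fps_const (c k) * (of_nat k * A ^ (k - 1) * d)) = gtr c M A * d"
proof -
  have "(\<Sum>k\<le>Suc M. fps_const (c k) * (of_nat k * A ^ (k - 1) * d))
      = (\<Sum>j\<le>M. fps_const (c (Suc j)) * (of_nat (Suc j) * A ^ j * d))"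
    by (subst sum.atMost_Suc_shift) simp
  also have "\<dots> = (\<Sum>j\<le>M. fps_const (c j) * A ^ j) * d"
  proof (simp only: sum_distrib_right, rule sum.cong[OF refl])
    fix j
    have 1: "fps_const (c j) = fps_const (of_nat (Suc j)) * fps_const (c (Suc j))"
      using cc[of j] by (simp del: of_nat_Suc)
    show "fps_const (c (Suc j)) * (of_nat (Suc j) * A ^ j * d) = fps_const (c j) * A ^ j * d"
      unfolding 1 fps_of_nat by (simp only: ac_simps)
  qed
  finally show ?thesis by (simp add: gtr_def)
qed

lemma gexp_deriv:
  fixes c :: "nat \<Rightarrow> 'r::comm_ring_1"
  assumes A0: "A $ 0 = 0" and cc: "\<And>k. of_nat (Suc k) * c (Suc k) = c k"
  shows "fps_deriv (gexp c A) = fps_deriv A * gexp c A"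
proof (rule fps_ext)
  fix n
  have "fps_deriv (gexp c A) $ n = of_nat (Suc n) * gexp c A $ Suc n" by simp
  also have "\<dots> = of_nat (Suc n) * gtr c (Suc n) A $ Suc n"
    using gexp_trunc[OF A0, of "Suc n" "Suc n"] by simp
  also have "\<dots> = fps_deriv (gtr c (Suc n) A) $ n" by simp
  also have "fps_deriv (gtr c (Suc n) A) = (\<Sum>k\<le>Suc n. fps_const (c k) * (of_nat k * A ^ (k - 1) * fps_deriv A))"
    unfolding gtr_def fps_deriv_sum
    by (rule sum.cong[OF refl]) (simp add: fps_deriv_power' mult_ac)
  also have "\<dots> = gtr c n A * fps_deriv A" by (rule gtr_shift[OF cc])
  also have "\<dots> $ n = (fps_deriv A * gexp c A) $ n"
    by (subst mult.commute, rule mult_nth_cong_right) (simp add: gexp_trunc[OF A0])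
  finally show "fps_deriv (gexp c A) $ n = (fps_deriv A * gexp c A) $ n" .
qed

lemma gexp_dmap:
  fixes c :: "nat \<Rightarrow> 'a::{comm_ring_1,real_algebra_1}"
  assumes der: "derivation D"
  assumes A0: "A $ 0 = 0" and cc: "\<And>k. of_nat (Suc k) * c (Suc k) = c k"
    and Dc: "\<And>k x. D (c k * x) = c k * D x"
  shows "dmap D (gexp c A) = dmap D A * gexp c A"
proof (rule fps_ext)
  fix n
  have "dmap D (gexp c A) $ n = D (gtr c (Suc n) A $ n)"
    using gexp_trunc[OF A0, of n "Suc n"] by (simp add: dmap_nth[OF der])
  also have "\<dots> = dmap D (gtr c (Suc n) A) $ n" by (simp add: dmap_nth[OF der])
  also have "dmap D (gtr c (Suc n) A) = (\<Sum>k\<le>Suc n. fps_const (c k) * (of_nat k * A ^ (k - 1) * dmap D A))"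
    unfolding gtr_def dmap_sum[OF der]
  proof (rule sum.cong[OF refl])
    fix k
    have "dmap D (fps_const (c k) * A ^ k) = fps_const (c k) * dmap D (A ^ k)"
      by (simp add: fps_eq_iff dmap_nth[OF der] Dc)
    then show "dmap D (fps_const (c k) * A ^ k) = fps_const (c k) * (of_nat k * A ^ (k - 1) * dmap D A)"
      by (simp add: dmap_power[OF der])
  qed
  also have "\<dots> = gtr c n A * dmap D A" by (rule gtr_shift[OF cc])
  also have "\<dots> $ n = (dmap D A * gexp c A) $ n"
    by (subst mult.commute, rule mult_nth_cong_right) (simp add: gexp_trunc[OF A0])
  finally show "dmap D (gexp c A) $ n = (dmap D A * gexp c A) $ n" .
qed

lemma gexp_0 [simp]: "gexp c A $ 0 = c 0"
  by (simp add: gexp_def)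

definition ic :: "nat \<Rightarrow> 'a::real_algebra_1" where "ic k = of_real (1 / fact k)"

lemma ic_rec: "of_nat (Suc k) * ic (Suc k) = (ic k :: 'a::real_algebra_1)"
proof -
  have "real (Suc k) * (1 / fact (Suc k)) = 1 / fact k"
    by (simp add: fact_Suc)
  then have "of_real (real (Suc k) * (1 / fact (Suc k))) = (of_real (1 / fact k) :: 'a)" by simp
  then show ?thesis unfolding ic_def of_real_mult by simp
qed

lemma ser_exp_gexp: "ser_exp A = gexp ic A"
  by (simp add: ser_exp_def gexp_def ic_def scaleR_conv_of_real)

lemma D_ic: "derivation D \<Longrightarrow> D (ic k * x) = ic k * D x"
  unfolding ic_def by (rule D_of_real_mult)


lemma fls_X_X_inv: "fls_X * fls_X_inv = (1::'a::comm_ring_1 fls)"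
  by (simp add: fls_X_conv_shift_1 fls_X_inv_conv_shift_1 fls_times_both_shifted_simp)

lemma fls_X_X_inv_pow: "fls_X ^ n * fls_X_inv ^ n = (1::'a::comm_ring_1 fls)"
  by (simp add: fls_X_X_inv flip: power_mult_distrib)

lemma fls_X_pow_fps: "fls_X ^ n = (fps_to_fls (fps_X ^ n) :: 'a::comm_ring_1 fls)"
  by (simp add: fps_to_fls_power)

lemma rep_self:
  fixes f :: "'a::comm_ring_1 fls"
  assumes "- fls_subdegree f \<le> int N"
  shows "f = fls_X_inv ^ N * fps_to_fls (fls_regpart (fls_shift (- int N) f))"
proof (cases "f = 0")
  case False
  have "fls_subdegree (fls_shift (- int N) f) \<ge> 0" using False assms by simp
  then have "fps_to_fls (fls_regpart (fls_shift (- int N) f)) = fls_shift (- int N) f" by simp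
  then show ?thesis by (simp add: fls_X_inv_power_times_conv_shift)
qed simp

lemma rep_pad:
  fixes B :: "'a::comm_ring_1 fps"
  shows "fls_X_inv ^ N * fps_to_fls B = fls_X_inv ^ (N + k) * fps_to_fls (fps_X ^ k * B)"
proof -
  have "fls_X_inv ^ (N + k) * fps_to_fls (fps_X ^ k * B) = fls_X_inv ^ N * (fls_X ^ k * fls_X_inv ^ k) * fps_to_fls B"
    by (simp add: fls_times_fps_to_fls fps_to_fls_power power_add mult_ac)
  then show ?thesis by (simp add: fls_X_X_inv_pow)
qed

lemma rep_unique:
  fixes B C :: "'a::comm_ring_1 fps"
  assumes "fls_X_inv ^ N * fps_to_fls B = fls_X_inv ^ N * fps_to_fls C"
  shows "B = C"
proof -
  have "fls_X ^ N * (fls_X_inv ^ N * fps_to_fls B) = fls_X ^ N * (fls_X_inv ^ N * fps_to_fls C)"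
    using assms by simp
  then have "fps_to_fls B = fps_to_fls C" by (simp add: fls_X_X_inv_pow flip: mult.assoc)
  then show ?thesis by simp
qed

lemma ex_rep: "\<exists>N B. (f::'a::comm_ring_1 fls) = fls_X_inv ^ N * fps_to_fls B"
proof -
  have "f = fls_X_inv ^ nat (- fls_subdegree f) * fps_to_fls (fls_regpart (fls_shift (- int (nat (- fls_subdegree f))) f))"
    by (rule rep_self) simp
  then show ?thesis by blast
qed

lemma ex_rep2: "\<exists>N B C. (f::'a::comm_ring_1 fls) = fls_X_inv ^ N * fps_to_fls B \<and> (g::'a fls) = fls_X_inv ^ N * fps_to_fls C"
proof -
  obtain N B where f: "f = fls_X_inv ^ N * fps_to_fls B" using ex_rep[of f] by blast
  obtain M C where g: "g = fls_X_inv ^ M * fps_to_fls C" using ex_rep[of g] by blast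
  have f': "f = fls_X_inv ^ (N + M) * fps_to_fls (fps_X ^ M * B)" using f rep_pad by blast
  have g': "g = fls_X_inv ^ (M + N) * fps_to_fls (fps_X ^ N * C)" using g rep_pad by blast
  show ?thesis using f' g' by (metis add.commute)
qed

locale comp =
  fixes W :: "'a::comm_ring_1 fps" and L :: "'a fls"
  assumes W0: "W $ 0 = 0" and LW: "L * fps_to_fls W = 1"
begin

definition phi :: "'a fls \<Rightarrow> 'a fls" where
  "phi f = L ^ nat (- fls_subdegree f) *
     fps_to_fls (fls_regpart (fls_shift (- int (nat (- fls_subdegree f))) f) oo W)"

lemma pad_phi:
  assumes "K \<le> M"
  shows "L ^ M * fps_to_fls ((fps_X ^ (M - K) * B) oo W) = L ^ K * fps_to_fls (B oo W)"
proof -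
  have "(fps_X ^ (M - K) * B) oo W = W ^ (M - K) * (B oo W)"
    by (simp add: fcomp_mult[OF W0] fcomp_X_power[OF W0])
  then have 1: "fps_to_fls ((fps_X ^ (M - K) * B) oo W) = fps_to_fls W ^ (M - K) * fps_to_fls (B oo W)"
    by (simp only: fls_times_fps_to_fls fps_to_fls_power)
  have 2: "L ^ M = L ^ K * L ^ (M - K)" using assms by (simp flip: power_add)
  have "L ^ M * fps_to_fls ((fps_X ^ (M - K) * B) oo W)
      = L ^ K * ((L * fps_to_fls W) ^ (M - K) * fps_to_fls (B oo W))"
    by (simp only: 1 2 power_mult_distrib mult.assoc)
  then show ?thesis by (simp add: LW)
qed

lemma phi_rep: "phi (fls_X_inv ^ N * fps_to_fls B) = L ^ N * fps_to_fls (B oo W)"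
proof -
  define f where "f = fls_X_inv ^ N * fps_to_fls B"
  define N0 where "N0 = nat (- fls_subdegree f)"
  define B0 where "B0 = fls_regpart (fls_shift (- int N0) f)"
  have f0: "f = fls_X_inv ^ N0 * fps_to_fls B0"
    unfolding B0_def N0_def by (rule rep_self) simp
  have ph: "phi f = L ^ N0 * fps_to_fls (B0 oo W)" by (simp add: phi_def N0_def B0_def)
  define M where "M = max N N0"
  have "fls_X_inv ^ M * fps_to_fls (fps_X ^ (M - N) * B) = fls_X_inv ^ M * fps_to_fls (fps_X ^ (M - N0) * B0)"
    using rep_pad[of N B "M - N"] rep_pad[of N0 B0 "M - N0"] f0 f_def by (simp add: M_def)
  then have e: "fps_X ^ (M - N) * B = fps_X ^ (M - N0) * B0" by (rule rep_unique)
  have "L ^ N * fps_to_fls (B oo W) = L ^ M * fps_to_fls ((fps_X ^ (M - N) * B) oo W)"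
    by (rule pad_phi[symmetric]) (simp add: M_def)
  also have "\<dots> = L ^ N0 * fps_to_fls (B0 oo W)" unfolding e
    by (rule pad_phi) (simp add: M_def)
  finally show ?thesis using ph f_def by simp
qed

lemma phi_add: "phi (f + g) = phi f + phi g"
proof -
  obtain N B C where fg: "f = fls_X_inv ^ N * fps_to_fls B" "g = fls_X_inv ^ N * fps_to_fls C"
    using ex_rep2 by blast
  have e: "f + g = fls_X_inv ^ N * fps_to_fls (B + C)" by (simp add: fg algebra_simps)
  have 1: "phi (f + g) = L ^ N * fps_to_fls ((B + C) oo W)" unfolding e by (rule phi_rep)
  have 2: "phi f = L ^ N * fps_to_fls (B oo W)" "phi g = L ^ N * fps_to_fls (C oo W)"
    unfolding fg by (rule phi_rep)+
  show ?thesis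
    by (simp only: 1 2 fps_compose_add_distrib fps_to_fls_plus distrib_left)
qed

lemma phi_mult: "phi (f * g) = phi f * phi g"
proof -
  obtain N B C where fg: "f = fls_X_inv ^ N * fps_to_fls B" "g = fls_X_inv ^ N * fps_to_fls C"
    using ex_rep2 by blast
  have e: "f * g = fls_X_inv ^ (N + N) * fps_to_fls (B * C)"
    by (simp add: fg fls_times_fps_to_fls power_add mult_ac)
  have 1: "phi (f * g) = L ^ (N + N) * fps_to_fls ((B * C) oo W)" unfolding e by (rule phi_rep)
  have 2: "phi f = L ^ N * fps_to_fls (B oo W)" "phi g = L ^ N * fps_to_fls (C oo W)"
    unfolding fg by (rule phi_rep)+
  show ?thesis
    by (simp only: 1 2 fcomp_mult[OF W0] fls_times_fps_to_fls power_add mult_ac)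
qed

lemma phi_uminus: "phi (- f) = - phi f"
proof -
  obtain N B where f: "f = fls_X_inv ^ N * fps_to_fls B" using ex_rep by blast
  have e: "- f = fls_X_inv ^ N * fps_to_fls (- B)" by (simp add: f)
  have 1: "phi (- f) = L ^ N * fps_to_fls ((- B) oo W)" unfolding e by (rule phi_rep)
  have 2: "phi f = L ^ N * fps_to_fls (B oo W)" unfolding f by (rule phi_rep)
  show ?thesis by (simp only: 1 2 fps_compose_uminus fps_to_fls_uminus mult_minus_right)
qed

lemma phi_diff: "phi (f - g) = phi f - phi g"
  using phi_add[of f "- g"] phi_uminus[of g] by simp

lemma phi_fps: "phi (fps_to_fls B) = fps_to_fls (B oo W)"
  using phi_rep[of 0 B] by simp

lemma phi_const [simp]: "phi (fls_const a) = fls_const a"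
  using phi_fps[of "fps_const a"] by simp

lemma phi_one [simp]: "phi 1 = 1"
  using phi_const[of 1] by simp

lemma phi_zero [simp]: "phi 0 = 0"
  using phi_const[of 0] by simp

lemma phi_X_inv [simp]: "phi fls_X_inv = L"
  using phi_rep[of 1 1] by simp

lemma phi_power: "phi (f ^ n) = phi f ^ n"
  by (induct n) (simp_all add: phi_mult)

lemma phi_of_nat [simp]: "phi (of_nat n) = of_nat n"
  by (simp add: fls_of_nat)

lemma phi_sum: "phi (sum f S) = sum (\<lambda>i. phi (f i)) S"
  by (induct S rule: infinite_finite_induct) (simp_all add: phi_add)

end


lemma fps_to_fls_sum: "fps_to_fls (sum f S) = sum (\<lambda>i. fps_to_fls (f i)) S"
  by (induct S rule: infinite_finite_induct) simp_all

definition Mp :: "'a::comm_ring_1 fps fps \<Rightarrow> 'a fls fps" where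
  "Mp G = Abs_fps (\<lambda>m. fps_to_fls (G $ m))"

definition Cp :: "'a::comm_ring_1 fps \<Rightarrow> 'a fls fps" where
  "Cp E = Abs_fps (\<lambda>n. fls_const (E $ n))"

lemma Mp_nth [simp]: "Mp G $ m = fps_to_fls (G $ m)" by (simp add: Mp_def)
lemma Cp_nth [simp]: "Cp E $ m = fls_const (E $ m)" by (simp add: Cp_def)

lemma Mp_mult: "Mp (G * H) = Mp G * Mp H"
  by (simp add: fps_eq_iff fps_mult_nth fps_to_fls_sum fls_times_fps_to_fls)

lemma Mp_one [simp]: "Mp 1 = 1"
  by (simp add: fps_eq_iff)

lemma Mp_power: "Mp (G ^ k) = Mp G ^ k"
  by (induct k) (simp_all add: Mp_mult)

lemma Mp_ser_exp2:
  fixes G :: "'a::{comm_ring_1,real_algebra_1} fps fps"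
  assumes G0: "G $ 0 = 0"
  shows "Mp (ser_exp2 G) = gexp (\<lambda>k. fls_const (ic k)) (Mp G)"
proof (rule fps_ext)
  fix m
  have 1: "ser_exp2 G $ m = (\<Sum>k\<le>m. fps_const (ic k) * (G ^ k) $ m)"
  proof (rule fps_ext)
    fix n
    have "ser_exp2 G $ m $ n = (\<Sum>k\<le>m+n. ic k * (G ^ k $ m $ n))"
      by (simp add: ser_exp2_def ic_def scaleR_conv_of_real)
    also have "\<dots> = (\<Sum>k\<le>m. ic k * (G ^ k $ m $ n))"
      apply (rule sum.mono_neutral_right)
      using startsby_zero_power_prefix[OF G0] by auto
    finally show "ser_exp2 G $ m $ n = (\<Sum>k\<le>m. fps_const (ic k) * (G ^ k) $ m) $ n"
      by (simp add: fps_sum_nth)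
  qed
  show "Mp (ser_exp2 G) $ m = gexp (\<lambda>k. fls_const (ic k)) (Mp G) $ m"
    by (simp add: 1 gexp_def fps_to_fls_sum fls_times_fps_to_fls Mp_power[symmetric])
qed

lemma fls_ic_rec: "of_nat (Suc k) * fls_const (ic (Suc k)) = (fls_const (ic k) :: 'a::{comm_ring_1,real_algebra_1} fls)"
  by (simp only: fls_of_nat fls_const_mult_const ic_rec)

lemma fps_X_deriv_nth: "(fps_X * fps_deriv P) $ n = (if n = 0 then 0 else of_nat n * P $ n)"
  by (cases n) simp_all

definition np :: "'a::comm_ring_1 fls \<Rightarrow> bool" where "np f \<longleftrightarrow> (\<forall>j>0. f $$ j = 0)"

lemma np_mult: "np f \<Longrightarrow> np g \<Longrightarrow> np (f * g)"
  unfolding np_def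
proof (intro allI impI)
  fix j :: int assume f: "\<forall>j>0. f $$ j = 0" and g: "\<forall>j>0. g $$ j = 0" and j: "j > 0"
  show "(f * g) $$ j = 0"
    unfolding fls_times_nth(2)
  proof (rule sum.neutral, intro ballI)
    fix x assume "x \<in> {fls_subdegree f..j - fls_subdegree g}"
    show "f $$ x * g $$ (j - x) = 0"
    proof (cases "x > 0")
      case True then show ?thesis using f by simp
    next
      case False then have "j - x > 0" using j by simp
      then show ?thesis using g by simp
    qed
  qed
qed

lemma np_add: "np f \<Longrightarrow> np g \<Longrightarrow> np (f + g)" by (simp add: np_def)
lemma np_diff: "np f \<Longrightarrow> np g \<Longrightarrow> np (f - g)" by (simp add: np_def)
lemma np_uminus: "np f \<Longrightarrow> np (- f)" by (simp add: np_def)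
lemma np_const [simp]: "np (fls_const a)" by (simp add: np_def)
lemma np_zero [simp]: "np 0" by (simp add: np_def)
lemma np_X_inv [simp]: "np fls_X_inv" by (simp add: np_def)
lemma np_of_nat [simp]: "np (of_nat n)" by (simp add: np_def fls_of_nat)
lemma np_sum: "(\<And>i. i \<in> S \<Longrightarrow> np (f i)) \<Longrightarrow> np (sum f S)"
  by (induct S rule: infinite_finite_induct) (simp_all add: np_add)

lemma np_subdeg: "np f \<Longrightarrow> fls_subdegree f \<le> 0"
proof (cases "f = 0")
  case False
  assume "np f"
  then show ?thesis using nth_fls_subdegree_nonzero[OF False] by (force simp: np_def)
qed simp

lemma np_mult0:
  assumes "np f" "np g"
  shows "(f * g) $$ 0 = f $$ 0 * g $$ 0"
proof -
  have "(f * g) $$ 0 = (\<Sum>i = fls_subdegree f..0 - fls_subdegree g. f $$ i * g $$ (0 - i))"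
    by (rule fls_times_nth(2))
  also have "\<dots> = (\<Sum>i\<in>{0::int}. f $$ i * g $$ (0 - i))"
  proof (rule sum.mono_neutral_right)
    show "\<forall>i\<in>{fls_subdegree f..0 - fls_subdegree g} - {0}. f $$ i * g $$ (0 - i) = 0"
    proof
      fix i assume i: "i \<in> {fls_subdegree f..0 - fls_subdegree g} - {0}"
      show "f $$ i * g $$ (0 - i) = 0"
      proof (cases "i > 0")
        case True then show ?thesis using assms by (simp add: np_def)
      next
        case False then have "0 - i > 0" using i by auto
        then show ?thesis using assms by (simp add: np_def)
      qed
    qed
    show "{0} \<subseteq> {fls_subdegree f..0 - fls_subdegree g}"
      using np_subdeg[OF assms(1)] np_subdeg[OF assms(2)] by simp
  qed simp
  finally show ?thesis by simp
qed

definition proj0 :: "'a::zero fls \<Rightarrow> 'a fls" where "proj0 f = f"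

lemma proj_pos_nth [simp]: "proj_pos f $$ j = (if j < 0 then f $$ j else 0)"
proof -
  obtain N where N: "\<forall>n<N. f $$ n = 0" by (elim fls_nth_vanishes_belowE)
  show ?thesis unfolding proj_pos_def
    by (rule nth_Abs_fls_lower_bound[of N]) (use N in auto)
qed


locale dc =
  fixes Ds :: "'a::{comm_ring_1,real_algebra_1} \<Rightarrow> 'a"
    and Dt :: "nat \<Rightarrow> 'a \<Rightarrow> 'a"
    and F :: 'a
    and L :: "'a fls"
  assumes dS: "derivation Ds"
    and dT: "\<And>n. n \<ge> 1 \<Longrightarrow> derivation (Dt n)"
    and cST: "\<And>n a. n \<ge> 1 \<Longrightarrow> Ds (Dt n a) = Dt n (Ds a)"
    and cTT: "\<And>m n a. m \<ge> 1 \<Longrightarrow> n \<ge> 1 \<Longrightarrow> Dt m (Dt n a) = Dt n (Dt m a)"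
    and bil: "bilinear_identity Ds Dt F"
    and finv: "formal_inverse_of (kser Ds Dt F) L"
begin

abbreviation E where "E \<equiv> kser Ds Dt F"
definition U where "U = fls_regpart (fls_shift (-1) L)"
definition V where "V = (SOME V. U * V = 1 \<and> L * fps_to_fls (E oo (fps_X * V)) = fls_X_inv)"
definition W where "W = fps_X * V"

lemma V: "U * V = 1" "L * fps_to_fls (E oo W) = fls_X_inv"
proof -
  have "\<exists>V. U * V = 1 \<and> L * fps_to_fls (E oo (fps_X * V)) = fls_X_inv"
    using finv by (simp add: formal_inverse_of_def U_def)
  then have "U * V = 1 \<and> L * fps_to_fls (E oo (fps_X * V)) = fls_X_inv"
    unfolding V_def by (rule someI_ex)
  then show "U * V = 1" "L * fps_to_fls (E oo W) = fls_X_inv" by (simp_all add: W_def)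
qed

lemma L_m1: "L $$ (-1) = 1" and L_below: "\<And>j. j < -1 \<Longrightarrow> L $$ j = 0"
  using finv by (simp_all add: formal_inverse_of_def)

lemma L_eq: "L = fls_X_inv * fps_to_fls U"
proof (rule fls_eqI)
  fix n
  show "L $$ n = (fls_X_inv * fps_to_fls U) $$ n"
  proof (cases "n < -1")
    case True then show ?thesis by (simp add: fls_X_inv_times_conv_shift L_below)
  next
    case False
    then have "int (nat (n + 1)) - 1 = n" by simp
    then show ?thesis using False by (simp add: fls_X_inv_times_conv_shift U_def)
  qed
qed

lemma W0: "W $ 0 = 0" by (simp add: W_def)

lemma LW: "L * fps_to_fls W = 1"
proof -
  have e: "L * fps_to_fls W = fls_X_inv * fps_to_fls U * fps_to_fls W"
    using arg_cong[where f = "\<lambda>x. x * fps_to_fls W", OF L_eq] .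
  have "L * fps_to_fls W = (fls_X * fls_X_inv) * fps_to_fls (U * V)"
    unfolding e by (simp add: W_def fls_times_fps_to_fls mult_ac)
  then show ?thesis by (simp add: fls_X_X_inv V)
qed

sublocale comp W L by unfold_locales (rule W0, rule LW)

definition aa :: "nat \<Rightarrow> 'a" where "aa p = Ds (Dt p F)"
definition h :: "'a fps" where "h = Abs_fps (\<lambda>p. if p = 0 then 0 else (1 / real p) *\<^sub>R Dt p F)"
definition hm :: "nat \<Rightarrow> 'a fps" where "hm m = dmap (Dt m) h"
definition Aser :: "'a fps" where
  "Aser = Abs_fps (\<lambda>n. if n = 0 then 0 else - ((1 / real n) *\<^sub>R Ds (Dt n F)))"

lemma E_gexp: "E = gexp ic Aser"
  by (simp add: kser_def ser_exp_gexp Aser_def)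

lemma Aser0: "Aser $ 0 = 0" by (simp add: Aser_def)

lemma E0: "E $ 0 = 1" by (simp add: E_gexp ic_def)

lemma E_deriv: "fps_deriv E = fps_deriv Aser * E"
  unfolding E_gexp by (rule gexp_deriv[OF Aser0 ic_rec])

lemma E_dmap: "derivation D \<Longrightarrow> dmap D E = dmap D Aser * E"
  unfolding E_gexp by (rule gexp_dmap[OF _ Aser0 ic_rec D_ic])

lemma Aser_h: "Aser = - dmap Ds h"
  by (simp add: fps_eq_iff Aser_def h_def dmap_nth[OF dS] D_scaleR[OF dS] D_0[OF dS])

lemma hm_nth: "m \<ge> 1 \<Longrightarrow> hm m $ n = (if n = 0 then 0 else (1 / real n) *\<^sub>R Dt m (Dt n F))"
  by (simp add: hm_def h_def dmap_nth[OF dT] D_scaleR[OF dT] D_0[OF dT])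

lemma hm0: "m \<ge> 1 \<Longrightarrow> hm m $ 0 = 0" by (simp add: hm_nth)

definition c :: "'a fls" where "c = fls_X_inv * fps_to_fls E"
definition G :: "'a fps fps" where "G = Gser Dt F"
definition Gam :: "'a fls fps" where "Gam = Mp G"
definition Om :: "'a fls fps" where "Om = Mp (ser_exp2 G)"
definition Psi :: "'a fls fps" where
  "Psi = Abs_fps (\<lambda>m. if m = 0 then 0 else fls_X_inv ^ m - fps_to_fls (hm m))"
definition Geo :: "'a fls fps" where "Geo = Abs_fps (\<lambda>m. if m = 0 then 0 else fls_X_inv ^ m)"
definition P :: "'a fls fps" where "P = Cp E - fps_X * fps_const c"
definition Q :: "'a fls fps" where "Q = 1 - fps_X * fps_const fls_X_inv"

lemma G0: "G $ 0 = 0" by (simp add: G_def Gser_def fps_eq_iff)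
lemma Gam0: "Gam $ 0 = 0" by (simp add: Gam_def G0)

lemma I1: "P = Q * Om"
proof -
  have b: "fls_X_inv * fps_to_fls (Cp E) - fls_const c
      = (fls_X_inv - fls_const fls_X_inv) * fps_to_fls Om"
    using bil by (simp add: bilinear_identity_def lift1_def lift2_def Cp_def Mp_def Om_def G_def c_def)
  have "fls_X * (fls_X_inv * fps_to_fls (Cp E) - fls_const c)
      = (fls_X * fls_X_inv) * fps_to_fls (Cp E) - fls_X * fls_const c"
    by (simp only: right_diff_distrib mult.assoc)
  also have "\<dots> = fps_to_fls P"
    by (simp add: P_def fls_times_fps_to_fls fls_X_X_inv)
  finally have 1: "fps_to_fls P = fls_X * (fls_X_inv * fps_to_fls (Cp E) - fls_const c)" ..
  have "fls_X * ((fls_X_inv - fls_const fls_X_inv) * fps_to_fls Om)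
      = ((fls_X * fls_X_inv) - fls_X * fls_const fls_X_inv) * fps_to_fls Om"
    by (simp only: mult.assoc[symmetric] right_diff_distrib)
  also have "\<dots> = fps_to_fls (Q * Om)"
    by (simp add: Q_def fls_times_fps_to_fls fls_X_X_inv)
  finally have 2: "fls_X * ((fls_X_inv - fls_const fls_X_inv) * fps_to_fls Om) = fps_to_fls (Q * Om)" .
  have "fps_to_fls P = fps_to_fls (Q * Om)" by (simp only: 1 2 b)
  then show ?thesis by simp
qed

lemma Om_gexp: "Om = gexp (\<lambda>k. fls_const (ic k)) Gam"
  unfolding Om_def Gam_def by (rule Mp_ser_exp2[OF G0])

lemma Om_deriv: "fps_deriv Om = fps_deriv Gam * Om"
  unfolding Om_gexp by (rule gexp_deriv[OF Gam0 fls_ic_rec])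

lemma hm_G: "m \<ge> 1 \<Longrightarrow> hm m = of_nat m * G $ m"
proof (rule fps_ext)
  fix n assume m: "m \<ge> 1"
  have 1: "of_nat m * (x::'a) = real m *\<^sub>R x" for x
    by (simp add: scaleR_conv_of_real)
  have 2: "1 / (real m * real n) * real m = 1 / real n" using m by simp
  show "hm m $ n = (of_nat m * G $ m) $ n"
    using m by (simp add: hm_nth G_def Gser_def 1 2)
qed

lemma Psi_eq: "Psi = Geo - fps_X * fps_deriv Gam"
proof (rule fps_ext)
  fix m
  show "Psi $ m = (Geo - fps_X * fps_deriv Gam) $ m"
  proof (cases m)
    case (Suc k)
    have "fps_to_fls (hm m) = fps_to_fls (of_nat m * G $ m)" using Suc hm_G by simp
    also have "\<dots> = of_nat m * Gam $ m"
      by (simp add: fls_times_fps_to_fls fps_to_fls_of_nat Gam_def)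
    finally show ?thesis using Suc by (simp add: Psi_def Geo_def)
  qed (simp add: Psi_def Geo_def)
qed

lemma Geo_rel: "Q * Geo = fps_X * fps_const fls_X_inv"
proof (rule fps_ext)
  fix m
  show "(Q * Geo) $ m = (fps_X * fps_const fls_X_inv) $ m"
  proof (cases m)
    case (Suc k)
    then show ?thesis by (cases k) (simp_all add: Q_def Geo_def algebra_simps)
  qed (simp add: Q_def Geo_def)
qed

lemma stepA: "P * Psi = - (fps_X * fps_deriv P)"
proof -
  have dQ: "fps_deriv Q = - fps_const fls_X_inv" by (simp add: Q_def)
  have "P * Psi = Om * (Q * Geo) - fps_X * (Q * (fps_deriv Gam * Om))"
    by (simp add: I1 Psi_eq algebra_simps)
  also have "\<dots> = Om * (fps_X * fps_const fls_X_inv) - fps_X * (Q * fps_deriv Om)"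
    by (simp only: Geo_rel Om_deriv)
  also have "\<dots> = - (fps_X * (fps_deriv Q * Om + Q * fps_deriv Om))"
    by (simp add: dQ algebra_simps del: fps_const_neg)
  also have "\<dots> = - (fps_X * fps_deriv P)" by (simp add: I1 add.commute)
  finally show ?thesis .
qed

definition PP :: "'a fls fps" where "PP = Cp E - fps_X * fps_const fls_X_inv"
definition Pf :: "'a fls fps" where
  "Pf = Abs_fps (\<lambda>j. if j = 0 then 0 else L ^ j - fps_to_fls (hm j oo W))"

lemma phi_c: "phi c = fls_X_inv" by (simp add: c_def phi_mult phi_fps V(2))

lemma P_nth: "P $ i = fls_const (E $ i) - (if i = 1 then c else 0)"
  by (cases i) (simp_all add: P_def)
lemma PP_nth: "PP $ i = fls_const (E $ i) - (if i = 1 then fls_X_inv else 0)"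
  by (cases i) (simp_all add: PP_def)

lemma phi_P: "phi (P $ i) = PP $ i"
  by (simp add: P_nth PP_nth phi_diff phi_c)

lemma phi_Psi: "phi (Psi $ j) = Pf $ j"
  by (simp add: Psi_def Pf_def phi_diff phi_power phi_fps)

lemma stepB: "PP * Pf = - (fps_X * fps_deriv PP)"
proof (rule fps_ext)
  fix n
  have "phi ((P * Psi) $ n) = phi ((- (fps_X * fps_deriv P)) $ n)" using stepA by simp
  moreover have "phi ((P * Psi) $ n) = (PP * Pf) $ n"
    by (simp add: fps_mult_nth phi_sum phi_mult phi_P phi_Psi)
  moreover have "phi ((- (fps_X * fps_deriv P)) $ n) = (- (fps_X * fps_deriv PP)) $ n"
    by (simp only: fps_neg_nth fps_X_deriv_nth phi_uminus)
       (simp add: phi_mult phi_P)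
  ultimately show "(PP * Pf) $ n = (- (fps_X * fps_deriv PP)) $ n" by simp
qed

lemma np_PP: "np (PP $ i)" by (simp add: PP_nth np_diff)
lemma PP0: "PP $ 0 = 1" by (simp add: PP_nth E0)
lemma Pf0: "Pf $ 0 = 0" by (simp add: Pf_def)
lemma PP_z0: "PP $ i $$ 0 = E $ i" by (simp add: PP_nth)

lemma coeffB:
  assumes "m \<ge> 1"
  shows "Pf $ m = - (of_nat m * PP $ m) - (\<Sum>i\<in>{1..m}. PP $ i * Pf $ (m - i))"
proof -
  have "Pf $ m + (\<Sum>i\<in>{1..m}. PP $ i * Pf $ (m - i)) = (PP * Pf) $ m"
    by (simp add: fps_mult_nth sum.atLeast_Suc_atMost PP0)
  also have "\<dots> = (- (fps_X * fps_deriv PP)) $ m" by (simp only: stepB)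
  also have "\<dots> = - (of_nat m * PP $ m)"
    using assms by (simp only: fps_neg_nth fps_X_deriv_nth) simp
  finally have e: "Pf $ m + (\<Sum>i\<in>{1..m}. PP $ i * Pf $ (m - i)) = - (of_nat m * PP $ m)" .
  show ?thesis by (simp only: e[symmetric] add_diff_cancel_right')
qed

lemma np_Pf: "np (Pf $ m)"
proof (induct m rule: less_induct)
  case (less m)
  show ?case
  proof (cases "m = 0")
    case True then show ?thesis by (simp add: Pf0)
  next
    case False
    then have "m \<ge> 1" by simp
    have "np (- (of_nat m * PP $ m) - (\<Sum>i\<in>{1..m}. PP $ i * Pf $ (m - i)))"
      using less False
      by (intro np_diff np_uminus np_mult np_sum np_PP) auto
    then show ?thesis using coeffB[OF \<open>m \<ge> 1\<close>] by simp
  qed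
qed

definition alpha :: "'a fps" where "alpha = Abs_fps (\<lambda>m. Pf $ m $$ 0)"

lemma E_alpha: "E * alpha = - (fps_X * fps_deriv E)"
proof (rule fps_ext)
  fix m
  have "((PP * Pf) $ m) $$ 0 = ((- (fps_X * fps_deriv PP)) $ m) $$ 0" using stepB by simp
  moreover have "((PP * Pf) $ m) $$ 0 = (E * alpha) $ m"
    by (simp add: fps_mult_nth fls_nth_sum np_mult0[OF np_PP np_Pf] PP_z0 alpha_def)
  moreover have "((- (fps_X * fps_deriv PP)) $ m) $$ 0 = (- (fps_X * fps_deriv E)) $ m"
    by (simp only: fps_neg_nth fps_X_deriv_nth) (simp add: fls_of_nat PP_z0)
  ultimately show "(E * alpha) $ m = (- (fps_X * fps_deriv E)) $ m" by simp
qed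

lemma alpha_eq: "alpha = - (fps_X * fps_deriv Aser)"
proof -
  define R where "R = fps_right_inverse E 1"
  have ER: "E * R = 1" unfolding R_def by (rule fps_right_inverse) (simp add: E0)
  have "E * (alpha + fps_X * fps_deriv Aser) = E * alpha + fps_X * fps_deriv E"
    by (simp add: E_deriv algebra_simps)
  also have "\<dots> = 0" by (simp add: E_alpha)
  finally have "E * (alpha + fps_X * fps_deriv Aser) = 0" .
  then have "R * (E * (alpha + fps_X * fps_deriv Aser)) = 0" by simp
  then have "alpha + fps_X * fps_deriv Aser = 0"
    by (simp only: mult.assoc[symmetric] mult.commute[of R] ER mult_1_left)
  then show ?thesis by (simp add: eq_neg_iff_add_eq_0)
qed

lemma Pf_z0: "m \<ge> 1 \<Longrightarrow> Pf $ m $$ 0 = aa m"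
proof -
  assume m: "m \<ge> 1"
  have "Pf $ m $$ 0 = alpha $ m" by (simp add: alpha_def)
  also have "\<dots> = - (of_nat m * Aser $ m)" using m by (simp add: alpha_eq)
  also have "\<dots> = of_nat m * ((1 / real m) *\<^sub>R Ds (Dt m F))"
    using m by (simp add: Aser_def)
  also have "\<dots> = real m *\<^sub>R ((1 / real m) *\<^sub>R Ds (Dt m F))"
    by (simp only: scaleR_conv_of_real of_real_of_nat_eq)
  also have "\<dots> = (real m * (1 / real m)) *\<^sub>R Ds (Dt m F)"
    by (simp only: scaleR_scaleR)
  also have "\<dots> = aa m" using m by (simp add: aa_def)
  finally show ?thesis .
qed

lemma Y_eq:
  assumes m: "m \<ge> 1"
  shows "fps_to_fls (hm m oo W) = L ^ m - proj_pos (L ^ m) - fls_const (aa m)"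
proof (rule fls_eqI)
  fix j
  have Y: "fps_to_fls (hm m oo W) $$ j = (L ^ m) $$ j - Pf $ m $$ j"
    using m by (simp add: Pf_def)
  show "fps_to_fls (hm m oo W) $$ j = (L ^ m - proj_pos (L ^ m) - fls_const (aa m)) $$ j"
  proof (cases "j > 0")
    case True
    then show ?thesis using Y np_Pf[of m] by (simp add: np_def)
  next
    case False
    then have "fps_to_fls (hm m oo W) $$ j = 0"
      using m by (cases "j = 0") (simp_all add: hm0)
    show ?thesis
    proof (cases "j = 0")
      case True
      then show ?thesis using Y Pf_z0[OF m] \<open>fps_to_fls (hm m oo W) $$ j = 0\<close> by simp
    next
      case False
      then have "j < 0" using \<open>\<not> j > 0\<close> by simp
      then show ?thesis using \<open>fps_to_fls (hm m oo W) $$ j = 0\<close> by simp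
    qed
  qed
qed

end


lemma DL_abs:
  fixes DL L e e1 w w' k x t Dw dL :: "'a::comm_ring_1"
  assumes h1: "L * (e * t + e1 * Dw) + DL * e = 0"
    and h2: "L * Dw + DL * w = 0"
    and h3: "L * (e1 * w') + dL * e = - (k^2)"
    and h4: "L * w' + dL * w = 0"
    and a: "L * e = k" and xk: "x * k = 1"
  shows "DL = x * dL * t"
proof -
  have "k*t + DL*(e - w*e1) = (L*(e*t + e1*Dw) + DL*e) - t*(L*e - k) - e1*(L*Dw + DL*w)"
    by (simp add: algebra_simps)
  then have A1: "k*t + DL*(e - w*e1) = 0" using h1 h2 a by simp
  have "dL*(e - w*e1) + k^2 = (L*(e1*w') + dL*e + k^2) - e1*(L*w' + dL*w)"
    by (simp add: algebra_simps)
  then have A2: "dL*(e - w*e1) + k^2 = 0" using h3 h4 by simp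
  have "DL*k^2 - dL*k*t = DL*(dL*(e - w*e1) + k^2) - dL*(k*t + DL*(e - w*e1))"
    by (simp add: algebra_simps)
  then have B: "DL*k^2 - dL*k*t = 0" using A1 A2 by simp
  have "DL - x*dL*t = x^2*(DL*k^2 - dL*k*t) - DL*((x*k)^2 - 1) + x*dL*t*(x*k - 1)"
    by (simp add: algebra_simps power2_eq_square)
  then show ?thesis using B xk by simp
qed

lemma Dw_abs:
  fixes DL L w w' x t Dw dL :: "'a::comm_ring_1"
  assumes h2: "L * Dw + DL * w = 0" and h4: "L * w' + dL * w = 0"
    and b: "L * w = 1" and DL: "DL = x * dL * t"
  shows "Dw = x * w' * t"
proof -
  have "Dw - x * w' * t = Dw * (1 - L * w) + w * (L * Dw + DL * w) - w * w * (DL - x * dL * t)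
      - x * t * (w' * (1 - L * w) + w * (L * w' + dL * w))"
    by (simp add: algebra_simps)
  then show ?thesis using h2 h4 b DL by simp
qed

lemma flow_abs:
  fixes x k dL tx tm DxB dB c mm Lm1 :: "'a::comm_ring_1"
  assumes xk: "x * k = 1"
    and ii: "(mm*Lm1*(x*dL*tx) - DxB - c) - x*(mm*Lm1*dL - dB)*tx = (x*dL*tm - c) - x*(dL + k^2)*tm"
  shows "tm = x*DxB - x^2*dB*tx"
proof -
  have "DxB - x*dB*tx - x*k^2*tm = ((x*dL*tm - c) - x*(dL + k^2)*tm)
      - ((mm*Lm1*(x*dL*tx) - DxB - c) - x*(mm*Lm1*dL - dB)*tx)"
    by (simp add: algebra_simps)
  then have e: "x*k^2*tm = DxB - x*dB*tx" using ii by simp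
  have "tm = (x*k)^2 * tm - ((x*k)^2 - 1) * tm" by (simp add: algebra_simps)
  also have "\<dots> = x * (x*k^2*tm) - ((x*k)^2 - 1) * tm" by (simp add: algebra_simps power2_eq_square)
  also have "\<dots> = x * (DxB - x*dB*tx) - ((x*k)^2 - 1) * tm" by (simp only: e)
  also have "(x*k)^2 - 1 = 0" using xk by simp
  also have "x * (DxB - x*dB*tx) - 0 * tm = x*DxB - x^2*dB*tx" by (simp add: algebra_simps power2_eq_square)
  finally show ?thesis .
qed

lemma s_abs:
  fixes x k dL tm DsB dB sm mm Lm1 ts :: "'a::comm_ring_1"
  assumes i: "mm*Lm1*(x*dL*ts) - DsB - sm = - tm + x*(mm*Lm1*dL - dB)*ts"
  shows "tm = DsB + sm - x*dB*ts"
proof -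
  have "tm - (DsB + sm - x*dB*ts) = (mm*Lm1*(x*dL*ts) - DsB - sm) - (- tm + x*(mm*Lm1*dL - dB)*ts)"
    by (simp add: algebra_simps)
  then have "tm - (DsB + sm - x*dB*ts) = 0" by (simp only: i diff_self)
  then show ?thesis by (simp only: right_minus_eq)
qed

lemma dmap_comm:
  assumes "derivation D1" "derivation D2" "\<And>a. D1 (D2 a) = D2 (D1 a)"
  shows "dmap D1 (dmap D2 B) = dmap D2 (dmap D1 B)"
  using assms by (simp add: fps_eq_iff dmap_nth)

context dc
begin

abbreviation Dx where "Dx \<equiv> Dt 1"

definition kap :: "'a fps \<Rightarrow> 'a fls" where "kap B = fps_to_fls (B oo W)"
definition tau :: "('a \<Rightarrow> 'a) \<Rightarrow> 'a fls" where "tau D = kap (dmap D Aser)"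

lemma kap_uminus: "kap (- B) = - kap B" by (simp add: kap_def fps_compose_uminus)

lemma kap_deriv: "fls_deriv (kap B) = kap (fps_deriv B) * fps_to_fls (fps_deriv W)"
  by (simp add: kap_def fls_deriv_fps_to_fls fcomp_deriv[OF W0] fls_times_fps_to_fls)

lemma kap_cmap:
  assumes D: "derivation D"
  shows "cmap D (kap B) = kap (dmap D B) + kap (fps_deriv B) * cmap D (fps_to_fls W)"
  by (simp add: kap_def cmap_fps_to_fls[OF D] dmap_compose[OF D W0] fls_times_fps_to_fls)

lemma DL_W:
  assumes D: "derivation D"
  shows "cmap D L = fls_X * fls_deriv L * tau D"
    and "cmap D (fps_to_fls W) = fls_X * fps_to_fls (fps_deriv W) * tau D"
proof -
  define e where "e = kap E"
  define e1 where "e1 = kap (fps_deriv E)"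
  define w where "w = fps_to_fls W"
  define w' where "w' = fps_to_fls (fps_deriv W)"
  have a: "L * e = fls_X_inv" using V(2) by (simp add: e_def kap_def)
  have b: "L * w = 1" using LW by (simp add: w_def)
  have ce: "cmap D e = e * tau D + e1 * cmap D w"
  proof -
    have "kap (dmap D E) = e * tau D"
      by (simp add: E_dmap[OF D] e_def tau_def kap_def fcomp_mult[OF W0] fls_times_fps_to_fls mult.commute)
    then show ?thesis by (simp add: e_def e1_def w_def kap_cmap[OF D])
  qed
  have de: "fls_deriv e = e1 * w'" by (simp add: e_def e1_def w'_def kap_deriv)
  have h1: "L * (e * tau D + e1 * cmap D w) + cmap D L * e = 0"
    using arg_cong[where f = "cmap D", OF a] by (simp add: cmap_mult[OF D] ce cmap_X_inv[OF D])
  have h2: "L * cmap D w + cmap D L * w = 0"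
    using arg_cong[where f = "cmap D", OF b] by (simp add: cmap_mult[OF D] cmap_one[OF D])
  have h3: "L * (e1 * w') + fls_deriv L * e = - (fls_X_inv ^ 2)"
    using arg_cong[where f = "fls_deriv", OF a] by (simp add: de)
  have h4: "L * w' + fls_deriv L * w = 0"
    using arg_cong[where f = "fls_deriv", OF b] by (simp add: w_def w'_def fls_deriv_fps_to_fls)
  show 1: "cmap D L = fls_X * fls_deriv L * tau D"
    by (rule DL_abs[OF h1 h2 h3 h4 a fls_X_X_inv])
  show "cmap D (fps_to_fls W) = fls_X * fps_to_fls (fps_deriv W) * tau D"
    using Dw_abs[OF h2 h4 b 1] by (simp add: w_def w'_def)
qed

lemma kap_chain:
  assumes D: "derivation D"
  shows "cmap D (kap B) = kap (dmap D B) + fls_X * fls_deriv (kap B) * tau D"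
  by (simp add: kap_cmap[OF D] DL_W(2)[OF D] kap_deriv mult_ac)

end


lemma flow_final:
  fixes x dL tm tx DxB dB :: "'a::comm_ring_1"
  assumes "tm = x*DxB - x^2*dB*tx"
  shows "x*dL*tm = (- (x^2*dB)) * (x*dL*tx) - DxB * (- (x^2*dL))"
  by (simp add: assms algebra_simps power2_eq_square)

lemma s_final:
  fixes x k dL ts tx s1 :: "'a::comm_ring_1"
  assumes e: "tx = s1 + x*k^2*ts" and xk: "x*k = 1"
  shows "x*dL*ts = x*(x*dL*tx) - (- s1) * (- (x^2*dL))"
proof -
  have z1: "tx - s1 - x*k^2*ts = 0" using e by simp
  have z2: "(x*k)^2 - 1 = 0" using xk by simp
  have "x*(x*dL*tx) - (- s1) * (- (x^2*dL)) - x*dL*ts = x^2*dL*(tx - s1 - x*k^2*ts) + x*dL*ts*((x*k)^2 - 1)"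
    by (simp add: algebra_simps power2_eq_square)
  also have "\<dots> = 0" by (simp only: z1 z2 mult_zero_right add_0)
  finally have "x*(x*dL*tx) - (- s1) * (- (x^2*dL)) = x*dL*ts" by (simp only: right_minus_eq)
  then show ?thesis by (rule sym)
qed

lemma lp_final:
  fixes x k tm tx ts DsB DxB dB sm s1 :: "'a::comm_ring_1"
  assumes e1: "tm = DsB + sm - x*dB*ts" and e2: "tm = x*DxB - x^2*dB*tx"
    and e3: "tx = s1 + x*k^2*ts" and xk: "x*k = 1"
  shows "- sm = DsB - (x*DxB - (- s1) * (- (x^2*dB)))"
proof -
  have "DsB - (x*DxB - (- s1) * (- (x^2*dB))) + sm
      = - (tm - (DsB + sm - x*dB*ts)) + (tm - (x*DxB - x^2*dB*tx))
        - x^2*dB*(tx - (s1 + x*k^2*ts)) - x*dB*ts*(x*k + 1)*(x*k - 1)"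
    by (simp add: algebra_simps power2_eq_square)
  also have "\<dots> = 0"
  proof -
    have z1: "tm - (DsB + sm - x*dB*ts) = 0" using e1 by simp
    have z2: "tm - (x*DxB - x^2*dB*tx) = 0" using e2 by simp
    have z3: "tx - (s1 + x*k^2*ts) = 0" using e3 by simp
    have z4: "x*k - 1 = 0" using xk by simp
    show ?thesis by (simp only: z1 z2 z3 z4 mult_zero_right minus_zero add_0 diff_0 diff_zero)
  qed
  finally have "DsB - (x*DxB - (- s1) * (- (x^2*dB))) = - sm" by (simp only: eq_neg_iff_add_eq_0)
  then show ?thesis by (rule sym)
qed

context dc
begin

lemma proj_L: "proj_pos L = fls_X_inv"
proof (rule fls_eqI)
  fix j
  show "proj_pos L $$ j = fls_X_inv $$ j"
    using L_m1 L_below[of j] by (cases "j < -1"; cases "j = -1") auto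
qed

lemma derDt: "m \<ge> 1 \<Longrightarrow> derivation (Dt m)" by (rule dT)

lemma tau_m: "m \<ge> 1 \<Longrightarrow> kap (dmap Ds (hm m)) = - tau (Dt m)"
proof -
  assume m: "m \<ge> 1"
  have "dmap (Dt m) Aser = - dmap (Dt m) (dmap Ds h)"
    by (simp add: Aser_h dmap_uminus[OF dT[OF m]])
  also have "dmap (Dt m) (dmap Ds h) = dmap Ds (dmap (Dt m) h)"
    by (rule dmap_comm[OF dT[OF m] dS]) (simp add: cST[OF m])
  finally show ?thesis by (simp add: tau_def hm_def kap_uminus)
qed

lemma hm_comm: "m \<ge> 1 \<Longrightarrow> dmap Dx (hm m) = dmap (Dt m) (hm 1)"
  unfolding hm_def by (rule dmap_comm[OF dT dT]) (simp_all add: cTT)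

lemma Y: "m \<ge> 1 \<Longrightarrow> kap (hm m) = L ^ m - proj_pos (L ^ m) - fls_const (aa m)"
  unfolding kap_def by (rule Y_eq)

lemma aa_comm: "m \<ge> 1 \<Longrightarrow> Dt m (aa 1) = Dx (aa m)"
  by (simp add: aa_def cST cTT)

abbreviation x where "x \<equiv> (fls_X :: 'a fls)"
abbreviation k where "k \<equiv> (fls_X_inv :: 'a fls)"

lemma tau_flow:
  assumes m: "m \<ge> 1"
  defines "B \<equiv> proj_pos (L ^ m)"
  shows "tau (Dt m) = x * cmap Dx B - x^2 * fls_deriv B * tau Dx"
proof -
  have one: "(1::nat) \<ge> 1" by simp
  have c1: "cmap Dx (kap (hm m)) = kap (dmap Dx (hm m)) + x * fls_deriv (kap (hm m)) * tau Dx"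
    by (rule kap_chain[OF dT[OF one]])
  have c2: "cmap (Dt m) (kap (hm 1)) = kap (dmap (Dt m) (hm 1)) + x * fls_deriv (kap (hm 1)) * tau (Dt m)"
    by (rule kap_chain[OF dT[OF m]])
  have ii: "cmap Dx (kap (hm m)) - x * fls_deriv (kap (hm m)) * tau Dx
      = cmap (Dt m) (kap (hm 1)) - x * fls_deriv (kap (hm 1)) * tau (Dt m)"
    using c1 c2 hm_comm[OF m] by simp
  have Ym: "kap (hm m) = L ^ m - B - fls_const (aa m)" unfolding B_def by (rule Y[OF m])
  have Y1: "kap (hm 1) = L - k - fls_const (aa 1)" using Y[OF one] by (simp add: proj_L)
  have dxL: "cmap Dx L = x * fls_deriv L * tau Dx" by (rule DL_W(1)[OF dT[OF one]])
  have dmL: "cmap (Dt m) L = x * fls_deriv L * tau (Dt m)" by (rule DL_W(1)[OF dT[OF m]])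
  have e1: "cmap Dx (kap (hm m)) = of_nat m * L ^ (m - 1) * (x * fls_deriv L * tau Dx) - cmap Dx B
      - fls_const (Dx (aa m))"
    unfolding Ym by (simp only: cmap_diff[OF dT[OF one]] cmap_power[OF dT[OF one]] cmap_const[OF dT[OF one]] dxL)
  have e2: "fls_deriv (kap (hm m)) = of_nat m * L ^ (m - 1) * fls_deriv L - fls_deriv B"
    unfolding Ym by (simp only: fls_deriv_sub fls_deriv_power fls_deriv_const diff_zero)
  have e3: "cmap (Dt m) (kap (hm 1)) = x * fls_deriv L * tau (Dt m) - fls_const (Dx (aa m))"
    unfolding Y1 by (simp only: cmap_diff[OF dT[OF m]] cmap_X_inv[OF dT[OF m]] cmap_const[OF dT[OF m]] dmL aa_comm[OF m] diff_zero)
  have e4: "fls_deriv (kap (hm 1)) = fls_deriv L + k^2"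
    unfolding Y1 by (simp only: fls_deriv_sub fls_deriv_X_inv fls_deriv_const diff_zero diff_minus_eq_add)
  have ii': "(of_nat m * L ^ (m - 1) * (x * fls_deriv L * tau Dx) - cmap Dx B - fls_const (Dx (aa m)))
      - x * (of_nat m * L ^ (m - 1) * fls_deriv L - fls_deriv B) * tau Dx
      = (x * fls_deriv L * tau (Dt m) - fls_const (Dx (aa m))) - x * (fls_deriv L + k^2) * tau (Dt m)"
    using ii by (simp only: e1 e2 e3 e4)
  show ?thesis by (rule flow_abs[OF fls_X_X_inv ii'])
qed

lemma tau_s:
  assumes m: "m \<ge> 1"
  defines "B \<equiv> proj_pos (L ^ m)"
  shows "tau (Dt m) = cmap Ds B + fls_const (Ds (aa m)) - x * fls_deriv B * tau Ds"
proof -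
  have c: "cmap Ds (kap (hm m)) = kap (dmap Ds (hm m)) + x * fls_deriv (kap (hm m)) * tau Ds"
    by (rule kap_chain[OF dS])
  have Ym: "kap (hm m) = L ^ m - B - fls_const (aa m)" unfolding B_def by (rule Y[OF m])
  have dsL: "cmap Ds L = x * fls_deriv L * tau Ds" by (rule DL_W(1)[OF dS])
  have e1: "cmap Ds (kap (hm m)) = of_nat m * L ^ (m - 1) * (x * fls_deriv L * tau Ds) - cmap Ds B
      - fls_const (Ds (aa m))"
    unfolding Ym by (simp only: cmap_diff[OF dS] cmap_power[OF dS] cmap_const[OF dS] dsL)
  have e2: "fls_deriv (kap (hm m)) = of_nat m * L ^ (m - 1) * fls_deriv L - fls_deriv B"
    unfolding Ym by (simp only: fls_deriv_sub fls_deriv_power fls_deriv_const diff_zero)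
  have i: "of_nat m * L ^ (m - 1) * (x * fls_deriv L * tau Ds) - cmap Ds B - fls_const (Ds (aa m))
      = - tau (Dt m) + x * (of_nat m * L ^ (m - 1) * fls_deriv L - fls_deriv B) * tau Ds"
    using c by (simp only: e1 e2 tau_m[OF m])
  show ?thesis by (rule s_abs[OF i])
qed

lemma tau_x_s: "tau Dx = fls_const (Ds (aa 1)) + x * k^2 * tau Ds"
proof -
  have one: "(1::nat) \<ge> 1" by simp
  show ?thesis using tau_s[OF one]
    by (simp only: power_one_right proj_L cmap_X_inv[OF dS] fls_deriv_X_inv) (simp add: algebra_simps)
qed

lemma final: "dcmKP1 Ds Dt L (- Ds (Ds F))"
proof -
  have one: "(1::nat) \<ge> 1" by simp
  have lp: "Dt m (- Ds (Ds F)) = - Ds (aa m)" if m: "m \<ge> 1" for m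
    using m by (simp add: aa_def D_uminus[OF dT[OF m]] cST)
  have flows: "cmap (Dt n) L = pbr Dx (proj_pos (L ^ n)) L" if n: "n \<ge> 1" for n
  proof -
    have "cmap (Dt n) L = x * fls_deriv L * tau (Dt n)" by (rule DL_W(1)[OF dT[OF n]])
    also have "\<dots> = (- (x^2 * fls_deriv (proj_pos (L ^ n)))) * (x * fls_deriv L * tau Dx)
        - cmap Dx (proj_pos (L ^ n)) * (- (x^2 * fls_deriv L))"
      by (rule flow_final) (rule tau_flow[OF n])
    also have "\<dots> = pbr Dx (proj_pos (L ^ n)) L"
      by (simp only: pbr_def dk_eq DL_W(1)[OF dT[OF one]])
    finally show ?thesis .
  qed
  have seq: "cmap Ds L = pbr_logP Dx (- Ds (Ds F)) L"
  proof -
    have "cmap Ds L = x * fls_deriv L * tau Ds" by (rule DL_W(1)[OF dS])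
    also have "\<dots> = x * (x * fls_deriv L * tau Dx) - (- fls_const (Ds (aa 1))) * (- (x^2 * fls_deriv L))"
      by (rule s_final[OF tau_x_s fls_X_X_inv])
    also have "\<dots> = pbr_logP Dx (- Ds (Ds F)) L"
      by (simp only: pbr_logP_def dk_eq DL_W(1)[OF dT[OF one]] lp[OF one] fls_const_uminus)
    finally show ?thesis .
  qed
  have lps: "fls_const (Dt n (- Ds (Ds F))) =
      cmap Ds (proj_pos (L ^ n)) - pbr_logP Dx (- Ds (Ds F)) (proj_pos (L ^ n))" if n: "n \<ge> 1" for n
  proof -
    have "fls_const (Dt n (- Ds (Ds F))) = - fls_const (Ds (aa n))" by (simp only: lp[OF n] fls_const_uminus)
    also have "\<dots> = cmap Ds (proj_pos (L ^ n)) - (x * cmap Dx (proj_pos (L ^ n))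
        - (- fls_const (Ds (aa 1))) * (- (x^2 * fls_deriv (proj_pos (L ^ n)))))"
      by (rule lp_final[OF tau_s[OF n] tau_flow[OF n] tau_x_s fls_X_X_inv])
    also have "\<dots> = cmap Ds (proj_pos (L ^ n)) - pbr_logP Dx (- Ds (Ds F)) (proj_pos (L ^ n))"
      by (simp only: pbr_logP_def dk_eq lp[OF one] fls_const_uminus)
    finally show ?thesis .
  qed
  show ?thesis unfolding dcmKP1_def
  proof (intro conjI allI impI)
    show "L $$ (-1) = 1" by (rule L_m1)
    show "L $$ j = 0" if "j < -1" for j using that by (rule L_below)
    show "cmap (Dt n) L = pbr Dx (proj_pos (L ^ n)) L" if "n \<ge> 1" for n using that by (rule flows)
    show "cmap Ds L = pbr_logP Dx (- Ds (Ds F)) L" by (rule seq)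
    show "fls_const (Dt n (- Ds (Ds F))) =
      cmap Ds (proj_pos (L ^ n)) - pbr_logP Dx (- Ds (Ds F)) (proj_pos (L ^ n))" if "n \<ge> 1" for n
      using that by (rule lps)
  qed
qed

end


theorem mainTheorem13:
  fixes Ds :: "'a::{comm_ring_1,real_algebra_1} \<Rightarrow> 'a"
    and Dt :: "nat \<Rightarrow> 'a \<Rightarrow> 'a"
    and F :: 'a
    and L :: "'a fls"
  assumes "derivation Ds"
    and "\<And>n. n \<ge> 1 \<Longrightarrow> derivation (Dt n)"
    and "\<And>n a. n \<ge> 1 \<Longrightarrow> Ds (Dt n a) = Dt n (Ds a)"
    and "\<And>m n a. m \<ge> 1 \<Longrightarrow> n \<ge> 1 \<Longrightarrow> Dt m (Dt n a) = Dt n (Dt m a)"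
    and "bilinear_identity Ds Dt F"
    and "formal_inverse_of (kser Ds Dt F) L"
  shows "dcmKP1 Ds Dt L (- Ds (Ds F))"
proof -
  interpret dc Ds Dt F L
    by unfold_locales (fact assms)+
  show ?thesis by (rule final)
qed

end
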